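(* Let $\sigma=(1\,2\,\cdots\,n)\in S_n$. Let $\mathcal{C}$ be a chain of the Greene–Kleitman symmetric chain decomposition of $B_n$ and let $X\in\mathcal{C}$ with $|X|\le\lfloor n/2\rfloor$. Then $(\sigma(X))^*=\sigma(X^* )$. Consequently $(\sigma^j(X))^*=\sigma^j(X^* )$ for all integers $j$, and hence $(\rho(X))^*=\rho(X^* )$ for all $\rho\in\langle\sigma\rangle$.
   Context: Greene–Kleitman SCD of $B_n$: for $A\subseteq[n]$, process $k=1,2,\dots,n$ in order; if $k\in A$ and there is some $j<k$ with $j\notin A$ and $j$ not yet paired, let $p_A(k)$ be the largest such $j$, and say $p_A(k)$ and $k$ are paired. Let $R(A)$ be the set of $k$ for which $p_A(k)$ is defined, $L(A)=\{p_A(k):k\in R(A)\}$, and write $[n]\setminus(R(A)\cup L(A))=\{a_1<a_2<\dots<a_s\}$. The chain of $A$ is $\mathcal{C}(A)=\{X\subseteq[n]: R(X)=R(A)\}$, which equals $R(A)\subset R(A)\cup\{a_1\}\subset R(A)\cup\{a_1,a_2\}\subset\dots\subset R(A)\cup\{a_1,\dots,a_s\}=[n]\setminus L(A)$. The distinct sets $\mathcal{C}(A)$, $A\in B_n$, form a partition of $B_n$ into symmetric chains (the Greene–Kleitman SCD). For a chain $\mathcal{C}$ of this decomposition and $X\in\mathcal{C}$ with $|X|\le\lfloor n/2\rfloor$, $X^*$ denotes the unique member of $\mathcal{C}$ with $|X^*|=n-|X|$. In $(\sigma(X))^*$, the star is taken in the chain containing $\sigma(X)$. *)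

theory Defs
  imports Main
begin

text \<open>The state after
processing 1..k is (U, R): U = elements j \<le> k, j \<notin> A, not yet paired;
R = elements k' \<le> k that got paired (the set R(A) restricted to 1..k).\<close>

fun gk_state :: "nat set \<Rightarrow> nat \<Rightarrow> nat set \<times> nat set" where
  "gk_state A 0 = ({}, {})"
| "gk_state A (Suc k) =
     (let (U, R) = gk_state A k in
      if Suc k \<notin> A then (insert (Suc k) U, R)
      else if U \<noteq> {} then (U - {Max U}, insert (Suc k) R)
      else (U, R))"

definition gk_R :: "nat \<Rightarrow> nat set \<Rightarrow> nat set" where
  "gk_R n A = snd (gk_state A n)"

definition gk_chain :: "nat \<Rightarrow> nat set \<Rightarrow> nat set set" where
  "gk_chain n A = {X. X \<subseteq> {1..n} \<and> gk_R n X = gk_R n A}"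

definition gk_star :: "nat \<Rightarrow> nat set \<Rightarrow> nat set" where
  "gk_star n X = (THE Y. Y \<in> gk_chain n X \<and> card Y = n - card X)"

definition sigma :: "nat \<Rightarrow> nat \<Rightarrow> nat" where
  "sigma n i = (if i = n then 1 else i + 1)"

definition sigma_pow :: "nat \<Rightarrow> int \<Rightarrow> nat \<Rightarrow> nat" where
  "sigma_pow n j = (if 0 \<le> j then sigma n ^^ nat j
                    else inv_into {1..n} (sigma n) ^^ nat (- j))"

end

theory Submission
  imports Defs
begin

definition w :: "nat set \<Rightarrow> nat \<Rightarrow> int" where "w A p = (if p \<in> A then -1 else 1)"

fun hh :: "nat set \<Rightarrow> nat \<Rightarrow> int" where
  "hh A 0 = 0" | "hh A (Suc m) = hh A m + w A (Suc m)"

fun cnt :: "nat set \<Rightarrow> nat \<Rightarrow> nat" where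
  "cnt A 0 = 0"
| "cnt A (Suc k) = (if Suc k \<in> A then cnt A k - 1 else Suc (cnt A k))"

definition mn :: "nat set \<Rightarrow> nat \<Rightarrow> int" where "mn A k = Min (hh A ` {0..k})"
definition sf :: "nat \<Rightarrow> nat set \<Rightarrow> nat \<Rightarrow> int" where "sf n A m = Min (hh A ` {m..n})"

lemma gk_state_inv:
  "fst (gk_state A k) \<subseteq> {1..k} \<and> card (fst (gk_state A k)) = cnt A k
   \<and> snd (gk_state A k) = {j\<in>{1..k}. j \<in> A \<and> 0 < cnt A (j-1)}"
proof (induction k)
  case 0
  then show ?case by simp
next
  case (Suc k)
  obtain U R where UR: "gk_state A k = (U, R)" by fastforce
  from Suc UR have U1: "U \<subseteq> {1..k}" and U2: "card U = cnt A k"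
    and R1: "R = {j\<in>{1..k}. j \<in> A \<and> 0 < cnt A (j-1)}" by auto
  have fin: "finite U" using U1 finite_subset by blast
  have Rs: "{j\<in>{1..Suc k}. j \<in> A \<and> 0 < cnt A (j-1)} =
     (if Suc k \<in> A \<and> 0 < cnt A k then insert (Suc k) R else R)"
    using R1 by (auto simp: le_Suc_eq)
  show ?case
  proof (cases "Suc k \<in> A")
    case False
    have "Suc k \<notin> U" using U1 by auto
    then show ?thesis using False UR U1 U2 fin Rs by auto
  next
    case True
    show ?thesis
    proof (cases "U = {}")
      case False
      have "Max U \<in> U" using False fin by simp
      then have "card (U - {Max U}) = card U - 1" using fin by simp
      moreover have "0 < cnt A k" using U2 False fin by (metis card_gt_0_iff)
      ultimately show ?thesis using True False UR U1 U2 Rs by auto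
    next
      case Ue: True
      then have "cnt A k = 0" using U2 by simp
      then show ?thesis using True Ue UR Rs by auto
    qed
  qed
qed

lemma gk_R_char: "gk_R n A = {j\<in>{1..n}. j \<in> A \<and> 0 < cnt A (j-1)}"
  unfolding gk_R_def using gk_state_inv by blast

lemma mn_0: "mn A 0 = 0" unfolding mn_def by simp
lemma mn_Suc: "mn A (Suc k) = min (mn A k) (hh A (Suc k))"
proof -
  have "{0..Suc k} = insert (Suc k) {0..k}" by auto
  then show ?thesis unfolding mn_def by (simp add: min.commute)
qed
lemma mn_le: "j \<le> k \<Longrightarrow> mn A k \<le> hh A j"
  unfolding mn_def by (rule Min_le) auto
lemma mn_mem: "\<exists>j\<le>k. mn A k = hh A j"
proof -
  have "mn A k \<in> hh A ` {0..k}" unfolding mn_def by (rule Min_in) auto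
  then show ?thesis by auto
qed

lemma cnt_hh: "int (cnt A k) = hh A k - mn A k"
proof (induction k)
  case 0 then show ?case by (simp add: mn_0)
next
  case (Suc k)
  have le: "mn A k \<le> hh A k" by (rule mn_le) simp
  show ?case
  proof (cases "Suc k \<in> A")
    case True
    then show ?thesis using Suc le by (auto simp: mn_Suc w_def min_def)
  next
    case False
    then show ?thesis using Suc le by (auto simp: mn_Suc w_def min_def)
  qed
qed

lemma ivl_Suc: "{1..Suc k} = insert (Suc k) {1..k}" by auto

lemma uniq_step:
  assumes inc: "Z \<inter> {1..k} \<subseteq> Y" and eq: "cnt Z k = cnt Y k + card (Y \<inter> {1..k} - Z)"
    and iff: "(Suc k \<in> Y \<and> 0 < cnt Y k) = (Suc k \<in> Z \<and> 0 < cnt Z k)"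
  shows "(Z \<inter> {1..Suc k} \<subseteq> Y \<and> cnt Z (Suc k) = cnt Y (Suc k) + card (Y \<inter> {1..Suc k} - Z))
       \<or> (Y \<inter> {1..Suc k} \<subseteq> Z \<and> cnt Y (Suc k) = cnt Z (Suc k) + card (Z \<inter> {1..Suc k} - Y))"
proof -
  let ?c = "card (Y \<inter> {1..k} - Z)"
  have fin: "finite (Y \<inter> {1..k} - Z)" by simp
  have nk: "Suc k \<notin> Y \<inter> {1..k} - Z" by simp
  show ?thesis
  proof (cases "Suc k \<in> Y")
    case yY: True
    show ?thesis
    proof (cases "Suc k \<in> Z")
      case True
      have s: "Y \<inter> {1..Suc k} - Z = Y \<inter> {1..k} - Z" using True by (auto simp: le_Suc_eq)
      have "cnt Z (Suc k) = cnt Y (Suc k) + ?c"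
      proof (cases "?c = 0")
        case c0: True
        have "cnt Z (Suc k) = cnt Z k - 1" "cnt Y (Suc k) = cnt Y k - 1"
          using yY \<open>Suc k \<in> Z\<close> by simp_all
        then show ?thesis using eq c0 by arith
      next
        case False
        have "(0 < cnt Y k) = (0 < cnt Z k)" using iff yY \<open>Suc k \<in> Z\<close> by simp
        then have "0 < cnt Y k" using eq False by arith
        then show ?thesis using eq yY \<open>Suc k \<in> Z\<close> by simp
      qed
      moreover have "Z \<inter> {1..Suc k} \<subseteq> Y" using inc yY by (auto simp: le_Suc_eq)
      ultimately show ?thesis unfolding s by blast
    next
      case False
      have s: "Y \<inter> {1..Suc k} - Z = insert (Suc k) (Y \<inter> {1..k} - Z)" using False yY by (auto simp: le_Suc_eq)
      have "cnt Y k = 0" using iff False yY by simp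
      then have "cnt Z (Suc k) = cnt Y (Suc k) + card (Y \<inter> {1..Suc k} - Z)"
        using s fin nk eq yY False by simp
      then show ?thesis using inc yY by (auto simp: le_Suc_eq)
    qed
  next
    case yN: False
    show ?thesis
    proof (cases "Suc k \<in> Z")
      case True
      have "cnt Z k = 0" using iff True yN by simp
      then have c0: "?c = 0" and cy: "cnt Y k = 0" using eq by auto
      then have "Y \<inter> {1..k} - Z = {}" using fin by simp
      then have s: "Z \<inter> {1..Suc k} - Y = {Suc k}" using inc True yN by (auto simp: le_Suc_eq)
      have "cnt Y (Suc k) = cnt Z (Suc k) + card (Z \<inter> {1..Suc k} - Y)"
        using s cy \<open>cnt Z k = 0\<close> True yN by simp
      moreover have "Y \<inter> {1..Suc k} \<subseteq> Z" using \<open>Y \<inter> {1..k} - Z = {}\<close> yN by (auto simp: le_Suc_eq)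
      ultimately show ?thesis by blast
    next
      case False
      have s: "Y \<inter> {1..Suc k} - Z = Y \<inter> {1..k} - Z" using yN by (auto simp: le_Suc_eq)
      then show ?thesis using inc eq yN False by (auto simp: le_Suc_eq)
    qed
  qed
qed

lemma uniq:
  assumes Y: "Y \<subseteq> {1..n}" and Z: "Z \<subseteq> {1..n}" and R: "gk_R n Y = gk_R n Z"
    and c: "card Y = card Z"
  shows "Y = Z"
proof -
  have iff: "(Suc k \<in> Y \<and> 0 < cnt Y k) = (Suc k \<in> Z \<and> 0 < cnt Z k)" if "Suc k \<le> n" for k
  proof -
    have "Suc k \<in> gk_R n Y \<longleftrightarrow> Suc k \<in> gk_R n Z" using R by simp
    then show ?thesis using that unfolding gk_R_char by auto
  qed
  have inv: "(Z \<inter> {1..k} \<subseteq> Y \<and> cnt Z k = cnt Y k + card (Y \<inter> {1..k} - Z))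
       \<or> (Y \<inter> {1..k} \<subseteq> Z \<and> cnt Y k = cnt Z k + card (Z \<inter> {1..k} - Y))" if "k \<le> n" for k
    using that
  proof (induction k)
    case 0 then show ?case by simp
  next
    case (Suc k)
    then have IH: "(Z \<inter> {1..k} \<subseteq> Y \<and> cnt Z k = cnt Y k + card (Y \<inter> {1..k} - Z))
       \<or> (Y \<inter> {1..k} \<subseteq> Z \<and> cnt Y k = cnt Z k + card (Z \<inter> {1..k} - Y))" by simp
    have i: "(Suc k \<in> Y \<and> 0 < cnt Y k) = (Suc k \<in> Z \<and> 0 < cnt Z k)" using iff Suc.prems by simp
    from IH show ?case
    proof
      assume a: "Z \<inter> {1..k} \<subseteq> Y \<and> cnt Z k = cnt Y k + card (Y \<inter> {1..k} - Z)"
      show ?case using uniq_step[OF a[THEN conjunct1] a[THEN conjunct2] i] .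
    next
      assume a: "Y \<inter> {1..k} \<subseteq> Z \<and> cnt Y k = cnt Z k + card (Z \<inter> {1..k} - Y)"
      show ?case using uniq_step[OF a[THEN conjunct1] a[THEN conjunct2] i[symmetric]] by blast
    qed
  qed
  from inv[of n] have "Z \<subseteq> Y \<or> Y \<subseteq> Z" using Y Z by blast
  moreover have "finite Y" "finite Z" using Y Z finite_subset by auto
  ultimately show ?thesis using c by (metis card_subset_eq)
qed

lemma hh_card: "hh X m = int m - 2 * int (card (X \<inter> {1..m}))"
proof (induction m)
  case 0 then show ?case by simp
next
  case (Suc m)
  show ?case
  proof (cases "Suc m \<in> X")
    case True
    have "X \<inter> {1..Suc m} = insert (Suc m) (X \<inter> {1..m})" using True by (auto simp: le_Suc_eq)
    then show ?thesis using Suc True by (simp add: w_def)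
  next
    case False
    have "X \<inter> {1..Suc m} = X \<inter> {1..m}" using False by (auto simp: le_Suc_eq)
    then show ?thesis using Suc False by (simp add: w_def)
  qed
qed

lemma hh_step: "hh A (Suc m) = hh A m + 1 \<or> hh A (Suc m) = hh A m - 1"
  by (simp add: w_def)

lemma sf_le: "m \<le> j \<Longrightarrow> j \<le> n \<Longrightarrow> sf n A m \<le> hh A j"
  unfolding sf_def by (rule Min_le) auto
lemma sf_mem: "m \<le> n \<Longrightarrow> \<exists>j. m \<le> j \<and> j \<le> n \<and> sf n A m = hh A j"
proof -
  assume "m \<le> n"
  then have "sf n A m \<in> hh A ` {m..n}" unfolding sf_def by (intro Min_in) auto
  then show ?thesis by auto
qed
lemma sf_n: "sf n A n = hh A n" unfolding sf_def by simp
lemma sf_step: "m < n \<Longrightarrow> sf n A m = min (hh A m) (sf n A (Suc m))"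
proof -
  assume "m < n"
  then have "{m..n} = insert m {Suc m..n}" by auto
  then show ?thesis unfolding sf_def using \<open>m < n\<close> by simp
qed
lemma sf_0: "sf n A 0 = mn A n" unfolding sf_def mn_def by simp

lemma mn_split: "m < n \<Longrightarrow> mn A n = min (mn A m) (sf n A (Suc m))"
proof -
  assume mn: "m < n"
  obtain j where j: "j \<le> n" "mn A n = hh A j" using mn_mem by blast
  obtain i where i: "i \<le> m" "mn A m = hh A i" using mn_mem by blast
  obtain l where l: "Suc m \<le> l" "l \<le> n" "sf n A (Suc m) = hh A l" using sf_mem mn by (metis Suc_leI)
  have "mn A n \<le> mn A m" using i mn mn_le by (metis order.trans less_imp_le)
  moreover have "mn A n \<le> sf n A (Suc m)" using l mn_le by metis
  moreover have "min (mn A m) (sf n A (Suc m)) \<le> mn A n"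
  proof (cases "j \<le> m")
    case True then show ?thesis using j mn_le by (metis min.coboundedI1)
  next
    case False then show ?thesis using j sf_le[of "Suc m" j n A] by (simp add: min.coboundedI2)
  qed
  ultimately show ?thesis by linarith
qed

definition Dl :: "nat \<Rightarrow> nat set \<Rightarrow> nat set" where
  "Dl n X = {k\<in>{1..n}. hh X (k-1) < sf n X k \<and> hh X (k-1) - mn X (k-1) < hh X n}"

lemma Dl_Suc: "Suc m \<in> Dl n X \<longleftrightarrow> Suc m \<le> n \<and> hh X m < sf n X (Suc m) \<and> hh X m - mn X m < hh X n"
  unfolding Dl_def by auto

lemma count_Dl:
  assumes d: "0 \<le> hh X n" and m: "m \<le> n"
  shows "int (card (Dl n X \<inter> {1..m})) = min (hh X n) (sf n X m - mn X n)"
  using m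
proof (induction m)
  case 0 then show ?case using d by (simp add: sf_0)
next
  case (Suc m)
  then have mlt: "m < n" by simp
  have IH: "int (card (Dl n X \<inter> {1..m})) = min (hh X n) (sf n X m - mn X n)" using Suc by simp
  have fin: "finite (Dl n X \<inter> {1..m})" by simp
  have nm: "Suc m \<notin> Dl n X \<inter> {1..m}" by simp
  have mnle: "mn X m \<le> hh X m" by (rule mn_le) simp
  show ?case
  proof (cases "hh X m < sf n X (Suc m)")
    case True
    have s1: "sf n X m = hh X m" using sf_step[OF mlt] True by simp
    have "sf n X (Suc m) \<le> hh X (Suc m)" using mlt by (intro sf_le) auto
    then have s2: "sf n X (Suc m) = hh X m + 1" using hh_step[of X m] True by auto
    have s3: "mn X n = mn X m" using mn_split[OF mlt] True mnle by simp
    show ?thesis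
    proof (cases "hh X m - mn X m < hh X n")
      case True2: True
      have "Suc m \<in> Dl n X" using Dl_Suc Suc.prems True True2 by simp
      then have "Dl n X \<inter> {1..Suc m} = insert (Suc m) (Dl n X \<inter> {1..m})" by (auto simp: le_Suc_eq)
      then show ?thesis using IH fin nm s1 s2 s3 True2 by simp
    next
      case False
      have "Suc m \<notin> Dl n X" using Dl_Suc False by simp
      then have "Dl n X \<inter> {1..Suc m} = Dl n X \<inter> {1..m}" by (auto simp: le_Suc_eq)
      then show ?thesis using IH s1 s2 s3 False by simp
    qed
  next
    case False
    have s1: "sf n X m = sf n X (Suc m)" using sf_step[OF mlt] False by simp
    have "Suc m \<notin> Dl n X" using Dl_Suc False by simp
    then have "Dl n X \<inter> {1..Suc m} = Dl n X \<inter> {1..m}" by (auto simp: le_Suc_eq)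
    then show ?thesis using IH s1 by simp
  qed
qed

lemma Dl_sub: "Dl n X \<subseteq> {1..n}" unfolding Dl_def by auto

lemma Dl_disj: "Dl n X \<inter> X = {}"
proof (rule ccontr)
  assume "Dl n X \<inter> X \<noteq> {}"
  then obtain k where k: "k \<in> Dl n X" "k \<in> X" by blast
  then obtain m where m: "k = Suc m" unfolding Dl_def by (cases k) auto
  have a: "hh X m < sf n X (Suc m)" "Suc m \<le> n" using k m Dl_Suc by auto
  have "sf n X (Suc m) \<le> hh X (Suc m)" using a by (intro sf_le) auto
  then show False using a k m by (simp add: w_def)
qed

lemma Dl_i:
  assumes d: "0 \<le> hh X n" and k: "Suc m \<in> Dl n X"
  shows "card (Dl n X \<inter> {1..m}) = cnt X m"
proof -
  have a: "Suc m \<le> n" "hh X m < sf n X (Suc m)" "hh X m - mn X m < hh X n" using k Dl_Suc by auto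
  have mlt: "m < n" using a by simp
  have mnle: "mn X m \<le> hh X m" by (rule mn_le) simp
  have s1: "sf n X m = hh X m" using sf_step[OF mlt] a by simp
  have s3: "mn X n = mn X m" using mn_split[OF mlt] a mnle by simp
  have "int (card (Dl n X \<inter> {1..m})) = hh X m - mn X m"
    using count_Dl[OF d, of m] mlt s1 s3 a by simp
  then show ?thesis using cnt_hh[of X m] by simp
qed

lemma Dl_ii:
  assumes d: "0 \<le> hh X n" and k: "Suc m \<in> X" "Suc m \<le> n" and p: "0 < card (Dl n X \<inter> {1..m})"
  shows "card (Dl n X \<inter> {1..m}) < cnt X m"
proof -
  have mlt: "m < n" using k by simp
  have c: "int (card (Dl n X \<inter> {1..m})) = min (hh X n) (sf n X m - mn X n)"
    using count_Dl[OF d, of m] mlt by simp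
  then have gt: "mn X n < sf n X m" using p by linarith
  have "sf n X m \<le> hh X (Suc m)" using mlt by (intro sf_le) auto
  then have s: "sf n X m \<le> hh X m - 1" using k by (simp add: w_def)
  have "sf n X m \<le> sf n X (Suc m)" using sf_step[OF mlt] by simp
  then have s3: "mn X n = mn X m" using mn_split[OF mlt, of X] gt by linarith
  show ?thesis using c s s3 cnt_hh[of X m] by linarith
qed

lemma Dl_inv:
  assumes d: "0 \<le> hh X n" and m: "m \<le> n"
  shows "cnt X m = cnt (X \<union> Dl n X) m + card (Dl n X \<inter> {1..m})"
  using m
proof (induction m)
  case 0 then show ?case by simp
next
  case (Suc m)
  let ?Y = "X \<union> Dl n X" and ?c = "card (Dl n X \<inter> {1..m})"
  have IH: "cnt X m = cnt ?Y m + ?c" using Suc by simp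
  have fin: "finite (Dl n X \<inter> {1..m})" by simp
  show ?case
  proof (cases "Suc m \<in> Dl n X")
    case True
    have nX: "Suc m \<notin> X" using True Dl_disj by blast
    have "?c = cnt X m" using Dl_i[OF d True] .
    then have y0: "cnt ?Y m = 0" using IH by simp
    have "Dl n X \<inter> {1..Suc m} = insert (Suc m) (Dl n X \<inter> {1..m})" using True by (auto simp: le_Suc_eq)
    then show ?thesis using IH y0 nX True fin by simp
  next
    case False
    have s: "Dl n X \<inter> {1..Suc m} = Dl n X \<inter> {1..m}" using False by (auto simp: le_Suc_eq)
    show ?thesis
    proof (cases "Suc m \<in> X")
      case True
      have "cnt X (Suc m) = cnt ?Y (Suc m) + ?c"
      proof (cases "?c = 0")
        case c0: True
        then show ?thesis using IH True by simp
      next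
        case c1: False
        have "?c < cnt X m" using Dl_ii[OF d True Suc.prems] c1 by (metis gr0I)
        then show ?thesis using IH True by simp
      qed
      then show ?thesis using s by simp
    next
      case nX: False
      then show ?thesis using s IH False by simp
    qed
  qed
qed

lemma Dl_R:
  assumes d: "0 \<le> hh X n"
  shows "gk_R n (X \<union> Dl n X) = gk_R n X"
proof -
  have "(k \<in> X \<union> Dl n X \<and> 0 < cnt (X \<union> Dl n X) (k-1)) = (k \<in> X \<and> 0 < cnt X (k-1))"
    if k: "k \<in> {1..n}" for k
  proof -
    obtain m where m: "k = Suc m" using k by (cases k) auto
    have inv: "cnt X m = cnt (X \<union> Dl n X) m + card (Dl n X \<inter> {1..m})"
      using Dl_inv[OF d, of m] k m by simp
    show ?thesis
    proof (cases "Suc m \<in> Dl n X")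
      case True
      have nX: "Suc m \<notin> X" using True Dl_disj by blast
      have "card (Dl n X \<inter> {1..m}) = cnt X m" using Dl_i[OF d True] .
      then show ?thesis using inv m nX by simp
    next
      case False
      show ?thesis
      proof (cases "card (Dl n X \<inter> {1..m}) = 0")
        case True then show ?thesis using inv m False by simp
      next
        case c1: False
        show ?thesis
        proof (cases "Suc m \<in> X")
          case True
          have "card (Dl n X \<inter> {1..m}) < cnt X m" using Dl_ii[OF d True] c1 k m by (metis atLeastAtMost_iff gr0I)
          then show ?thesis using inv m True by simp
        next
          case nX: False then show ?thesis using m False by simp
        qed
      qed
    qed
  qed
  then show ?thesis unfolding gk_R_char by blast
qed

lemma Dl_card:
  assumes X: "X \<subseteq> {1..n}" and c: "2 * card X \<le> n"
  shows "card (X \<union> Dl n X) = n - card X"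
proof -
  have hn: "hh X n = int n - 2 * int (card X)"
    using hh_card[of X n] X by (simp add: Int_absorb2)
  then have d: "0 \<le> hh X n" using c by simp
  have "mn X n \<le> 0" using mn_le[of 0 n X] by simp
  then have "int (card (Dl n X)) = hh X n"
    using count_Dl[OF d, of n] sf_n[of n X] Dl_sub[of n X] by (simp add: Int_absorb2)
  moreover have "card (X \<union> Dl n X) = card X + card (Dl n X)"
  proof -
    have "finite X" "finite (Dl n X)" using X Dl_sub[of n X] finite_subset by auto
    then show ?thesis using Dl_disj[of n X] by (subst card_Un_disjoint) auto
  qed
  ultimately show ?thesis using hn c by simp
qed

definition cyc :: "nat \<Rightarrow> nat \<Rightarrow> nat \<Rightarrow> nat" where "cyc n k t = ((k - 1 + t) mod n) + 1"
definition DD :: "nat \<Rightarrow> nat set \<Rightarrow> nat set" where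
  "DD n X = {k\<in>{1..n}. \<forall>L\<in>{1..n}. 0 < (\<Sum>t<L. w X (cyc n k t))}"

lemma cyc_sum:
  assumes j: "Suc j \<le> n" and L: "L \<le> n"
  shows "(\<Sum>t<L. w X (cyc n (Suc j) t)) = (if j + L \<le> n then hh X (j + L) - hh X j
          else hh X n - hh X j + hh X (j + L - n))"
  using L
proof (induction L)
  case 0
  have "j \<le> n" using j by simp
  then show ?case by simp
next
  case (Suc L)
  have IH: "(\<Sum>t<L. w X (cyc n (Suc j) t)) = (if j + L \<le> n then hh X (j + L) - hh X j
          else hh X n - hh X j + hh X (j + L - n))" using Suc by simp
  have Ln: "L < n" using Suc by simp
  consider (a) "j + L < n" | (b) "j + L = n" | (c) "n < j + L" by linarith
  then show ?case
  proof cases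
    case a
    then have "cyc n (Suc j) L = Suc (j + L)" unfolding cyc_def by simp
    then show ?thesis using IH a by simp
  next
    case b
    then have "cyc n (Suc j) L = 1" unfolding cyc_def by simp
    moreover have "j + Suc L - n = Suc 0" using b by simp
    ultimately show ?thesis using IH b by simp
  next
    case c
    have "(j + L) mod n = (j + L - n) mod n" using c by (simp add: le_mod_geq)
    also have "\<dots> = j + L - n" using c j Ln by (intro mod_less) linarith
    finally have "(j + L) mod n = j + L - n" .
    then have "cyc n (Suc j) L = Suc (j + L - n)" unfolding cyc_def by simp
    moreover have "j + Suc L - n = Suc (j + L - n)" using c by simp
    ultimately show ?thesis using IH c by simp
  qed
qed

lemma DD_eq: "DD n X = Dl n X"
proof (intro set_eqI iffI)
  fix k assume k: "k \<in> DD n X"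
  then obtain j where kj: "k = Suc j" "Suc j \<le> n" unfolding DD_def by (cases k) auto
  have S: "\<And>L. 1 \<le> L \<Longrightarrow> L \<le> n \<Longrightarrow> 0 < (if j + L \<le> n then hh X (j + L) - hh X j
          else hh X n - hh X j + hh X (j + L - n))"
    using k kj cyc_sum[OF kj(2)] unfolding DD_def by auto
  obtain m where m: "Suc j \<le> m" "m \<le> n" "sf n X (Suc j) = hh X m" using sf_mem kj by blast
  have 1: "hh X j < sf n X (Suc j)" using S[of "m - j"] m by simp
  have hn: "hh X j < hh X n" using S[of "n - j"] kj by simp
  obtain i where i: "i \<le> j" "mn X j = hh X i" using mn_mem by blast
  have 2: "hh X j - mn X j < hh X n"
  proof (cases "i = 0")
    case True then show ?thesis using i hn by simp
  next
    case False
    have "0 < hh X n - hh X j + hh X (j + (n - j + i) - n)"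
      using S[of "n - j + i"] False i kj by (simp split: if_splits)
    moreover have "j + (n - j + i) - n = i" using kj i by simp
    ultimately show ?thesis using i by simp
  qed
  show "k \<in> Dl n X" using 1 2 kj Dl_Suc by simp
next
  fix k assume k: "k \<in> Dl n X"
  then obtain j where kj: "k = Suc j" "Suc j \<le> n" unfolding Dl_def by (cases k) auto
  have a: "hh X j < sf n X (Suc j)" "hh X j - mn X j < hh X n" using k kj Dl_Suc by auto
  have "0 < (\<Sum>t<L. w X (cyc n (Suc j) t))" if L: "L \<in> {1..n}" for L
  proof (cases "j + L \<le> n")
    case True
    have "sf n X (Suc j) \<le> hh X (j + L)" using True L by (intro sf_le) auto
    then show ?thesis using cyc_sum[OF kj(2), of L] L True a by simp
  next
    case False
    have "mn X j \<le> hh X (j + L - n)" using False L by (intro mn_le) auto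
    then show ?thesis using cyc_sum[OF kj(2), of L] L False a by simp
  qed
  then show "k \<in> DD n X" unfolding DD_def using kj by auto
qed

lemma sigma_range: "q \<in> {1..n} \<Longrightarrow> sigma n q \<in> {1..n}"
  unfolding sigma_def by auto
lemma sigma_inj: "inj_on (sigma n) {1..n}"
  unfolding sigma_def inj_on_def by auto
lemma sigma_surj: "sigma n ` {1..n} = {1..n}"
proof
  show "sigma n ` {1..n} \<subseteq> {1..n}" using sigma_range by auto
next
  show "{1..n} \<subseteq> sigma n ` {1..n}"
  proof
    fix q assume q: "q \<in> {1..n}"
    show "q \<in> sigma n ` {1..n}"
    proof (cases "q = 1")
      case True
      then have "sigma n n = q" unfolding sigma_def by simp
      then show ?thesis using q by force
    next
      case False
      then have "sigma n (q - 1) = q" "q - 1 \<in> {1..n}" using q unfolding sigma_def by auto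
      then show ?thesis by force
    qed
  qed
qed

lemma w_sigma: "q \<in> {1..n} \<Longrightarrow> X \<subseteq> {1..n} \<Longrightarrow> w (sigma n ` X) (sigma n q) = w X q"
  unfolding w_def using sigma_inj[of n] by (simp add: inj_on_image_mem_iff)

lemma cyc_range: "0 < n \<Longrightarrow> cyc n k t \<in> {1..n}"
  unfolding cyc_def by (auto simp: Suc_le_eq)

lemma sigma_cyc: "k \<in> {1..n} \<Longrightarrow> sigma n (cyc n k t) = cyc n (sigma n k) t"
proof -
  assume k: "k \<in> {1..n}"
  then obtain j where j: "k = Suc j" "j < n" by (cases k) auto
  have r: "(j + t) mod n < n" using j by simp
  have lhs: "sigma n (cyc n k t) = Suc ((j + t) mod n) mod n + 1"
  proof (cases "Suc ((j + t) mod n) = n")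
    case True
    have "cyc n k t = n" unfolding cyc_def using j True by simp
    then show ?thesis unfolding sigma_def using True by simp
  next
    case False
    then have lt: "Suc ((j + t) mod n) < n" using r by simp
    have "cyc n k t = Suc ((j + t) mod n)" unfolding cyc_def using j by simp
    moreover have "Suc ((j + t) mod n) mod n = Suc ((j + t) mod n)" using lt by (rule mod_less)
    ultimately show ?thesis unfolding sigma_def using False by presburger
  qed
  have "sigma n k - 1 = Suc j mod n" unfolding sigma_def using j by auto
  then have rhs: "cyc n (sigma n k) t = (Suc j mod n + t) mod n + 1" unfolding cyc_def by simp
  show ?thesis unfolding lhs rhs by (simp add: mod_Suc_eq mod_add_left_eq)
qed

lemma DD_rot:
  assumes X: "X \<subseteq> {1..n}" and k: "k \<in> {1..n}"
  shows "sigma n k \<in> DD n (sigma n ` X) \<longleftrightarrow> k \<in> DD n X"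
proof -
  have n: "0 < n" using k by simp
  have "(\<Sum>t<L. w (sigma n ` X) (cyc n (sigma n k) t)) = (\<Sum>t<L. w X (cyc n k t))" for L
    by (rule sum.cong) (auto simp: sigma_cyc[OF k, symmetric] w_sigma[OF cyc_range[OF n] X])
  then show ?thesis unfolding DD_def using k sigma_range[OF k] by auto
qed

lemma DD_img:
  assumes X: "X \<subseteq> {1..n}"
  shows "sigma n ` DD n X = DD n (sigma n ` X)"
proof
  show "sigma n ` DD n X \<subseteq> DD n (sigma n ` X)"
    using DD_rot[OF X] unfolding DD_def by auto
next
  show "DD n (sigma n ` X) \<subseteq> sigma n ` DD n X"
  proof
    fix q assume q: "q \<in> DD n (sigma n ` X)"
    then have "q \<in> {1..n}" unfolding DD_def by auto
    then obtain k where k: "k \<in> {1..n}" "q = sigma n k" using sigma_surj by blast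
    then show "q \<in> sigma n ` DD n X" using q DD_rot[OF X k(1)] by auto
  qed
qed

lemma star_eq:
  assumes X: "X \<subseteq> {1..n}" and c: "2 * card X \<le> n"
  shows "gk_star n X = X \<union> DD n X"
proof -
  let ?S = "X \<union> Dl n X"
  have hn: "hh X n = int n - 2 * int (card X)"
    using hh_card[of X n] X by (simp add: Int_absorb2)
  then have d: "0 \<le> hh X n" using c by simp
  have Ssub: "?S \<subseteq> {1..n}" using X Dl_sub by auto
  have SR: "gk_R n ?S = gk_R n X" using Dl_R[OF d] .
  have Sc: "card ?S = n - card X" using Dl_card[OF X c] .
  have "gk_star n X = ?S"
    unfolding gk_star_def
  proof (rule the_equality)
    show "?S \<in> gk_chain n X \<and> card ?S = n - card X" using Ssub SR Sc unfolding gk_chain_def by auto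
  next
    fix Y assume Y: "Y \<in> gk_chain n X \<and> card Y = n - card X"
    then have "Y \<subseteq> {1..n}" "gk_R n Y = gk_R n ?S" using SR unfolding gk_chain_def by auto
    then show "Y = ?S" using uniq[OF _ Ssub] Y Sc by auto
  qed
  then show ?thesis by (simp add: DD_eq)
qed

lemma star_sub: "X \<subseteq> {1..n} \<Longrightarrow> 2 * card X \<le> n \<Longrightarrow> gk_star n X \<subseteq> {1..n}"
  using star_eq[of X n] unfolding DD_def by auto

definition PP :: "nat \<Rightarrow> (nat \<Rightarrow> nat) \<Rightarrow> bool" where
  "PP n f \<longleftrightarrow> f ` {1..n} = {1..n} \<and> inj_on f {1..n} \<and>
     (\<forall>X. X \<subseteq> {1..n} \<longrightarrow> 2 * card X \<le> n \<longrightarrow> gk_star n (f ` X) = f ` gk_star n X)"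

lemma PP_sigma: "PP n (sigma n)"
  unfolding PP_def
proof (intro conjI allI impI)
  show "sigma n ` {1..n} = {1..n}" by (rule sigma_surj)
  show "inj_on (sigma n) {1..n}" by (rule sigma_inj)
  fix X assume X: "X \<subseteq> {1..n}" and c: "2 * card X \<le> n"
  have X': "sigma n ` X \<subseteq> {1..n}" using X sigma_range by auto
  have "card (sigma n ` X) = card X" using X sigma_inj by (metis card_image inj_on_subset)
  then have c': "2 * card (sigma n ` X) \<le> n" using c by simp
  show "gk_star n (sigma n ` X) = sigma n ` gk_star n X"
    using star_eq[OF X' c'] star_eq[OF X c] DD_img[OF X] by (simp add: image_Un)
qed

lemma PP_comp:
  assumes f: "PP n f" and g: "PP n g"
  shows "PP n (f \<circ> g)"
  unfolding PP_def
proof (intro conjI allI impI)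
  show "(f \<circ> g) ` {1..n} = {1..n}" using f g unfolding PP_def by (metis image_comp)
  show "inj_on (f \<circ> g) {1..n}" using f g unfolding PP_def by (metis comp_inj_on)
  fix X assume X: "X \<subseteq> {1..n}" and c: "2 * card X \<le> n"
  have X': "g ` X \<subseteq> {1..n}" using X g unfolding PP_def by auto
  have "card (g ` X) = card X" using X g unfolding PP_def by (metis card_image inj_on_subset)
  then have c': "2 * card (g ` X) \<le> n" using c by simp
  have "gk_star n ((f \<circ> g) ` X) = gk_star n (f ` (g ` X))" by (simp add: image_comp)
  also have "\<dots> = f ` gk_star n (g ` X)" using f X' c' unfolding PP_def by blast
  also have "\<dots> = f ` g ` gk_star n X" using g X c unfolding PP_def by simp
  finally show "gk_star n ((f \<circ> g) ` X) = (f \<circ> g) ` gk_star n X" by (simp add: image_comp)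
qed

lemma PP_id: "PP n id"
  unfolding PP_def by simp

lemma PP_pow: "PP n f \<Longrightarrow> PP n (f ^^ m)"
  by (induction m) (auto simp: PP_id PP_comp)

lemma PP_inv:
  assumes f: "PP n f"
  shows "PP n (inv_into {1..n} f)"
proof -
  let ?t = "inv_into {1..n} f"
  have fs: "f ` {1..n} = {1..n}" and fi: "inj_on f {1..n}" using f unfolding PP_def by auto
  have bt: "bij_betw ?t {1..n} {1..n}"
    using bij_betw_inv_into[of f "{1..n}" "{1..n}"] fs fi unfolding bij_betw_def by auto
  show ?thesis unfolding PP_def
  proof (intro conjI allI impI)
    show "?t ` {1..n} = {1..n}" "inj_on ?t {1..n}" using bt unfolding bij_betw_def by auto
    fix X assume X: "X \<subseteq> {1..n}" and c: "2 * card X \<le> n"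
    let ?Z = "?t ` X"
    have Z: "?Z \<subseteq> {1..n}" using X bt unfolding bij_betw_def by auto
    have "card ?Z = card X" using X bt unfolding bij_betw_def by (metis card_image inj_on_subset)
    then have cZ: "2 * card ?Z \<le> n" using c by simp
    have fZ: "f ` ?Z = X" using X fs by (simp add: image_inv_into_cancel)
    have "gk_star n X = f ` gk_star n ?Z" using f Z cZ fZ unfolding PP_def by metis
    then have "?t ` gk_star n X = ?t ` f ` gk_star n ?Z" by simp
    also have "\<dots> = gk_star n ?Z" using inv_into_image_cancel[OF fi star_sub[OF Z cZ]] .
    finally show "gk_star n ?Z = ?t ` gk_star n X" by simp
  qed
qed

lemma PP_sigma_pow: "PP n (sigma_pow n j)"
  unfolding sigma_pow_def using PP_pow PP_inv PP_sigma by simp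

theorem lemma3p1:
  fixes n :: nat and A X :: "nat set"
  assumes "A \<subseteq> {1..n}"
    and "X \<in> gk_chain n A"
    and "card X \<le> n div 2"
  shows "gk_star n (sigma n ` X) = sigma n ` gk_star n X
       \<and> (\<forall>j::int. gk_star n (sigma_pow n j ` X) = sigma_pow n j ` gk_star n X)
       \<and> (\<forall>\<rho> \<in> range (sigma_pow n). gk_star n (\<rho> ` X) = \<rho> ` gk_star n X)"
proof -
  have X: "X \<subseteq> {1..n}" using assms(2) unfolding gk_chain_def by auto
  have c: "2 * card X \<le> n" using assms(3) by simp
  have 2: "\<forall>j::int. gk_star n (sigma_pow n j ` X) = sigma_pow n j ` gk_star n X"
    using PP_sigma_pow X c unfolding PP_def by blast
  have 1: "gk_star n (sigma n ` X) = sigma n ` gk_star n X"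
    using PP_sigma X c unfolding PP_def by blast
  show ?thesis using 1 2 by auto
qed

end
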